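(* For every integer $k\geq 3$, there exists a bridgeless cubic graph $G$ such that $\mu_3(G)=k$.
   Context: A 1-factor is a spanning 1-regular subgraph. $\mu_3(G)$ is the minimum, over all lists (with possible repetition) of three 1-factors of $G$, of the number of edges of $G$ contained in none of them. *)

theory Defs
  imports Main
begin

definition graph :: "'a set \<Rightarrow> 'a set set \<Rightarrow> bool" where
  "graph V E \<longleftrightarrow> finite V \<and> (\<forall>e\<in>E. e \<subseteq> V \<and> card e = 2)"

definition degree :: "'a set set \<Rightarrow> 'a \<Rightarrow> nat" where
  "degree E v = card {e\<in>E. v \<in> e}"

definition cubic :: "'a set \<Rightarrow> 'a set set \<Rightarrow> bool" where
  "cubic V E \<longleftrightarrow> graph V E \<and> (\<forall>v\<in>V. degree E v = 3)"

definition adj :: "'a set set \<Rightarrow> 'a \<Rightarrow> 'a \<Rightarrow> bool" where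
  "adj E u v \<longleftrightarrow> {u, v} \<in> E"

definition connected_in :: "'a set set \<Rightarrow> 'a \<Rightarrow> 'a \<Rightarrow> bool" where
  "connected_in E u v \<longleftrightarrow> (adj E)\<^sup>*\<^sup>* u v"

definition is_bridge :: "'a set set \<Rightarrow> 'a set \<Rightarrow> bool" where
  "is_bridge E e \<longleftrightarrow> e \<in> E \<and> (\<exists>u v. e = {u, v} \<and> \<not> connected_in (E - {e}) u v)"

definition bridgeless :: "'a set set \<Rightarrow> bool" where
  "bridgeless E \<longleftrightarrow> (\<forall>e\<in>E. \<not> is_bridge E e)"

definition one_factor :: "'a set \<Rightarrow> 'a set set \<Rightarrow> 'a set set \<Rightarrow> bool" where
  "one_factor V E F \<longleftrightarrow> F \<subseteq> E \<and> (\<forall>v\<in>V. degree F v = 1)"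

definition mu3 :: "'a set \<Rightarrow> 'a set set \<Rightarrow> nat" where
  "mu3 V E = (LEAST n. \<exists>F1 F2 F3. one_factor V E F1 \<and> one_factor V E F2 \<and> one_factor V E F3
                 \<and> n = card (E - (F1 \<union> F2 \<union> F3)))"

end

theory Submission
  imports Defs
begin


section \<open>Connectivity basics\<close>

lemma adj_sym: "adj E x y = adj E y x"
  by (simp add: adj_def insert_commute)

lemma conn_sym: "connected_in E x y \<Longrightarrow> connected_in E y x"
  unfolding connected_in_def
proof (induction rule: rtranclp_induct)
  case base then show ?case by simp
next
  case (step y z)
  then show ?case using adj_sym
    by (metis converse_rtranclp_into_rtranclp)
qed

lemma conn_mono: "connected_in A x y \<Longrightarrow> A \<subseteq> B \<Longrightarrow> connected_in B x y"
  unfolding connected_in_def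
proof (induction rule: rtranclp_induct)
  case base then show ?case by simp
next
  case (step y z)
  then have "adj B y z" by (auto simp: adj_def)
  with step show ?case by (meson rtranclp.rtrancl_into_rtrancl)
qed

section \<open>mu3 characterisation\<close>

definition mu3is :: "'a set \<Rightarrow> 'a set set \<Rightarrow> nat \<Rightarrow> bool" where
  "mu3is V E k \<longleftrightarrow>
    (\<exists>F1 F2 F3. one_factor V E F1 \<and> one_factor V E F2 \<and> one_factor V E F3 \<and> card (E - (F1 \<union> F2 \<union> F3)) = k)
  \<and> (\<forall>F1 F2 F3. one_factor V E F1 \<and> one_factor V E F2 \<and> one_factor V E F3 \<longrightarrow> k \<le> card (E - (F1 \<union> F2 \<union> F3)))"

lemma mu3is_mu3: "mu3is V E k \<Longrightarrow> mu3 V E = k"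
  unfolding mu3is_def mu3_def
  by (rule Least_equality) auto

section \<open>Disjoint union\<close>

lemma graph_edges_sub: "graph V E \<Longrightarrow> e \<in> E \<Longrightarrow> e \<subseteq> V"
  by (auto simp: graph_def)

lemma graph_edges_ne: "graph V E \<Longrightarrow> e \<in> E \<Longrightarrow> e \<noteq> {}"
  by (auto simp: graph_def)

lemma graph_finE: "graph V E \<Longrightarrow> finite E"
  unfolding graph_def by (meson Pow_iff finite_Pow_iff finite_subset subsetI)

lemma graph_disjE: "graph V1 E1 \<Longrightarrow> graph V2 E2 \<Longrightarrow> V1 \<inter> V2 = {} \<Longrightarrow> E1 \<inter> E2 = {}"
proof (rule ccontr)
  assume a: "graph V1 E1" "graph V2 E2" "V1 \<inter> V2 = {}" "E1 \<inter> E2 \<noteq> {}"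
  then obtain e where "e \<in> E1" "e \<in> E2" by blast
  then have "e \<subseteq> V1" "e \<subseteq> V2" "e \<noteq> {}"
    using graph_edges_sub[OF a(1)] graph_edges_sub[OF a(2)] graph_edges_ne[OF a(1)] by auto
  then show False using a(3) by blast
qed

lemma graph_Un: "graph V1 E1 \<Longrightarrow> graph V2 E2 \<Longrightarrow> graph (V1 \<union> V2) (E1 \<union> E2)"
  by (auto simp: graph_def)

lemma deg_restrict:
  assumes "graph V1 E1" "graph V2 E2" "V1 \<inter> V2 = {}" "v \<in> V1" "F \<subseteq> E1 \<union> E2"
  shows "degree F v = degree (F \<inter> E1) v"
proof -
  have "{e\<in>F. v \<in> e} = {e\<in>F \<inter> E1. v \<in> e}"
    using assms graph_edges_sub by blast
  then show ?thesis by (simp add: degree_def)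
qed

lemma cubic_Un:
  assumes "cubic V1 E1" "cubic V2 E2" "V1 \<inter> V2 = {}"
  shows "cubic (V1 \<union> V2) (E1 \<union> E2)"
proof -
  have g: "graph V1 E1" "graph V2 E2" using assms by (auto simp: cubic_def)
  have "degree (E1 \<union> E2) v = 3" if "v \<in> V1 \<union> V2" for v
  proof (cases "v \<in> V1")
    case True
    then have "degree (E1 \<union> E2) v = degree ((E1 \<union> E2) \<inter> E1) v"
      using deg_restrict[OF g assms(3)] by blast
    also have "(E1 \<union> E2) \<inter> E1 = E1" by blast
    finally show ?thesis using assms True by (simp add: cubic_def)
  next
    case False
    then have v2: "v \<in> V2" using that by blast
    have "degree (E2 \<union> E1) v = degree ((E2 \<union> E1) \<inter> E2) v"
      using deg_restrict[OF g(2) g(1) _ v2] assms(3) by blast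
    also have "(E2 \<union> E1) \<inter> E2 = E2" by blast
    finally show ?thesis using assms v2 by (simp add: cubic_def Un_commute)
  qed
  then show ?thesis using g graph_Un by (auto simp: cubic_def)
qed

lemma bridgeless_Un:
  assumes "bridgeless E1" "bridgeless E2"
  shows "bridgeless (E1 \<union> E2)"
  unfolding bridgeless_def is_bridge_def
proof (intro ballI notI)
  fix e assume e: "e \<in> E1 \<union> E2" and "e \<in> E1 \<union> E2 \<and> (\<exists>u v. e = {u, v} \<and> \<not> connected_in (E1 \<union> E2 - {e}) u v)"
  then obtain u v where uv: "e = {u,v}" "\<not> connected_in (E1 \<union> E2 - {e}) u v" by blast
  show False
  proof (cases "e \<in> E1")
    case True
    then have "connected_in (E1 - {e}) u v" using assms(1) uv unfolding bridgeless_def is_bridge_def by blast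
    then show False using uv conn_mono[of "E1 - {e}" u v "E1 \<union> E2 - {e}"] by blast
  next
    case False
    then have "e \<in> E2" using e by blast
    then have "connected_in (E2 - {e}) u v" using assms(2) uv unfolding bridgeless_def is_bridge_def by blast
    then show False using uv conn_mono[of "E2 - {e}" u v "E1 \<union> E2 - {e}"] by blast
  qed
qed

lemma one_factor_Un_split:
  assumes g: "graph V1 E1" "graph V2 E2" "V1 \<inter> V2 = {}"
    and F: "one_factor (V1 \<union> V2) (E1 \<union> E2) F"
  shows "one_factor V1 E1 (F \<inter> E1)" "one_factor V2 E2 (F \<inter> E2)" "F = (F \<inter> E1) \<union> (F \<inter> E2)"
proof -
  have sub: "F \<subseteq> E1 \<union> E2" using F by (simp add: one_factor_def)
  show "one_factor V1 E1 (F \<inter> E1)"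
    unfolding one_factor_def
  proof (intro conjI ballI)
    fix v assume "v \<in> V1"
    then have "degree F v = degree (F \<inter> E1) v" using deg_restrict[OF g _ sub] by blast
    then show "degree (F \<inter> E1) v = 1" using F \<open>v \<in> V1\<close> by (simp add: one_factor_def)
  qed auto
  show "one_factor V2 E2 (F \<inter> E2)"
    unfolding one_factor_def
  proof (intro conjI ballI)
    fix v assume v: "v \<in> V2"
    have sub': "F \<subseteq> E2 \<union> E1" using sub by blast
    have "degree F v = degree (F \<inter> E2) v" using deg_restrict[OF g(2) g(1) _ v sub'] g(3) by blast
    then show "degree (F \<inter> E2) v = 1" using F v by (simp add: one_factor_def)
  qed auto
  show "F = (F \<inter> E1) \<union> (F \<inter> E2)" using sub by blast
qed

lemma one_factor_Un_join:
  assumes g: "graph V1 E1" "graph V2 E2" "V1 \<inter> V2 = {}"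
    and F: "one_factor V1 E1 A" "one_factor V2 E2 B"
  shows "one_factor (V1 \<union> V2) (E1 \<union> E2) (A \<union> B)"
  unfolding one_factor_def
proof (intro conjI ballI)
  show "A \<union> B \<subseteq> E1 \<union> E2" using F by (auto simp: one_factor_def)
  fix v assume v: "v \<in> V1 \<union> V2"
  have sub: "A \<union> B \<subseteq> E1 \<union> E2" using F by (auto simp: one_factor_def)
  show "degree (A \<union> B) v = 1"
  proof (cases "v \<in> V1")
    case True
    then have "degree (A \<union> B) v = degree ((A \<union> B) \<inter> E1) v" using deg_restrict[OF g _ sub] by blast
    also have "(A \<union> B) \<inter> E1 = A" using F graph_disjE[OF g]
      unfolding one_factor_def by blast
    finally show ?thesis using F True by (simp add: one_factor_def)
  next
    case False
    then have v2: "v \<in> V2" using v by blast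
    have sub': "A \<union> B \<subseteq> E2 \<union> E1" using sub by blast
    have "degree (A \<union> B) v = degree ((A \<union> B) \<inter> E2) v" using deg_restrict[OF g(2) g(1) _ v2 sub'] g(3) by blast
    also have "(A \<union> B) \<inter> E2 = B" using F graph_disjE[OF g]
      unfolding one_factor_def by blast
    finally show ?thesis using F v2 by (simp add: one_factor_def)
  qed
qed

lemma card_unc_split:
  assumes g: "graph V1 E1" "graph V2 E2" "V1 \<inter> V2 = {}"
    and A: "A1 \<subseteq> E1" "A2 \<subseteq> E1" "A3 \<subseteq> E1" and B: "B1 \<subseteq> E2" "B2 \<subseteq> E2" "B3 \<subseteq> E2"
  shows "card ((E1 \<union> E2) - ((A1 \<union> B1) \<union> (A2 \<union> B2) \<union> (A3 \<union> B3)))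
       = card (E1 - (A1 \<union> A2 \<union> A3)) + card (E2 - (B1 \<union> B2 \<union> B3))"
proof -
  have dis: "E1 \<inter> E2 = {}" using graph_disjE[OF g] .
  have eq: "(E1 \<union> E2) - ((A1 \<union> B1) \<union> (A2 \<union> B2) \<union> (A3 \<union> B3))
        = (E1 - (A1 \<union> A2 \<union> A3)) \<union> (E2 - (B1 \<union> B2 \<union> B3))"
    using dis A B by blast
  show ?thesis unfolding eq
    by (rule card_Un_disjoint) (use g graph_finE dis in auto)
qed

lemma mu3is_Un:
  assumes g: "graph V1 E1" "graph V2 E2" "V1 \<inter> V2 = {}"
    and m: "mu3is V1 E1 k1" "mu3is V2 E2 k2"
  shows "mu3is (V1 \<union> V2) (E1 \<union> E2) (k1 + k2)"
proof -
  from m(1) obtain A1 A2 A3 where A: "one_factor V1 E1 A1" "one_factor V1 E1 A2" "one_factor V1 E1 A3"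
      "card (E1 - (A1 \<union> A2 \<union> A3)) = k1" unfolding mu3is_def by blast
  from m(2) obtain B1 B2 B3 where B: "one_factor V2 E2 B1" "one_factor V2 E2 B2" "one_factor V2 E2 B3"
      "card (E2 - (B1 \<union> B2 \<union> B3)) = k2" unfolding mu3is_def by blast
  have ex: "\<exists>F1 F2 F3. one_factor (V1 \<union> V2) (E1 \<union> E2) F1 \<and> one_factor (V1 \<union> V2) (E1 \<union> E2) F2
      \<and> one_factor (V1 \<union> V2) (E1 \<union> E2) F3 \<and> card ((E1 \<union> E2) - (F1 \<union> F2 \<union> F3)) = k1 + k2"
    apply (rule exI[of _ "A1 \<union> B1"], rule exI[of _ "A2 \<union> B2"], rule exI[of _ "A3 \<union> B3"])
    using one_factor_Un_join[OF g] A B card_unc_split[OF g, of A1 A2 A3 B1 B2 B3]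
    by (auto simp: one_factor_def)
  have lb: "k1 + k2 \<le> card ((E1 \<union> E2) - (F1 \<union> F2 \<union> F3))"
    if F: "one_factor (V1 \<union> V2) (E1 \<union> E2) F1" "one_factor (V1 \<union> V2) (E1 \<union> E2) F2"
      "one_factor (V1 \<union> V2) (E1 \<union> E2) F3" for F1 F2 F3
  proof -
    note s1 = one_factor_Un_split[OF g F(1)] and s2 = one_factor_Un_split[OF g F(2)]
      and s3 = one_factor_Un_split[OF g F(3)]
    have "card ((E1 \<union> E2) - (F1 \<union> F2 \<union> F3)) =
      card ((E1 \<union> E2) - (((F1 \<inter> E1) \<union> (F1 \<inter> E2)) \<union> ((F2 \<inter> E1) \<union> (F2 \<inter> E2)) \<union> ((F3 \<inter> E1) \<union> (F3 \<inter> E2))))"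
      using s1(3) s2(3) s3(3) by simp
    also have "\<dots> = card (E1 - ((F1 \<inter> E1) \<union> (F2 \<inter> E1) \<union> (F3 \<inter> E1))) + card (E2 - ((F1 \<inter> E2) \<union> (F2 \<inter> E2) \<union> (F3 \<inter> E2)))"
      by (rule card_unc_split[OF g]) auto
    also have "\<dots> \<ge> k1 + k2"
      using m s1 s2 s3 unfolding mu3is_def by (meson add_le_mono)
    finally show ?thesis .
  qed
  show ?thesis unfolding mu3is_def using ex lb by blast
qed

lemma empty_graph: "cubic {} {}" "bridgeless {}" "mu3is ({}::'a set) {} 0"
  by (auto simp: cubic_def graph_def bridgeless_def is_bridge_def mu3is_def one_factor_def)



lemma inj_imf: "inj f \<Longrightarrow> inj (image f)"
  by (simp add: inj_def inj_image_eq_iff)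

lemma degree_map: assumes "inj f" shows "degree (image f ` A) (f v) = degree A v"
proof -
  have "{e' \<in> image f ` A. f v \<in> e'} = image f ` {e\<in>A. v \<in> e}"
    using inj_image_mem_iff[OF assms] by blast
  moreover have "inj_on (image f) {e\<in>A. v \<in> e}" using inj_imf[OF assms] by (simp add: inj_on_def inj_def)
  ultimately show ?thesis unfolding degree_def by (simp add: card_image)
qed

lemma graph_map: assumes "inj f" "graph V E" shows "graph (f ` V) (image f ` E)"
  unfolding graph_def
proof (intro conjI ballI)
  show "finite (f ` V)" using assms(2) by (simp add: graph_def)
  fix e' assume "e' \<in> image f ` E"
  then obtain e where e: "e \<in> E" "e' = f ` e" by blast
  have "e \<subseteq> V" "card e = 2" using assms(2) e(1) by (auto simp: graph_def)
  moreover have "card (f ` e) = card e" using assms(1) by (simp add: card_image inj_on_subset)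
  ultimately show "e' \<subseteq> f ` V" "card e' = 2" using e(2) by auto
qed

lemma cubic_map: assumes "inj f" "cubic V E" shows "cubic (f ` V) (image f ` E)"
  using assms graph_map[OF assms(1)] degree_map[OF assms(1)] unfolding cubic_def by auto

lemma conn_map: "connected_in A x y \<Longrightarrow> connected_in (image f ` A) (f x) (f y)"
  unfolding connected_in_def
proof (induction rule: rtranclp_induct)
  case base then show ?case by simp
next
  case (step y z)
  then have "f ` {y,z} \<in> image f ` A" unfolding adj_def by blast
  then have "adj (image f ` A) (f y) (f z)" unfolding adj_def by simp
  with step show ?case by (meson rtranclp.rtrancl_into_rtrancl)
qed

lemma bridgeless_map: assumes "inj f" "bridgeless E" shows "bridgeless (image f ` E)"
  unfolding bridgeless_def is_bridge_def
proof (intro ballI notI)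
  fix e' assume "e' \<in> image f ` E" and
    h: "e' \<in> image f ` E \<and> (\<exists>u v. e' = {u, v} \<and> \<not> connected_in (image f ` E - {e'}) u v)"
  then obtain e where e: "e \<in> E" "e' = f ` e" by blast
  from h obtain u' v' where uv: "e' = {u',v'}" "\<not> connected_in (image f ` E - {e'}) u' v'" by blast
  obtain u where u: "u \<in> e" "u' = f u" using uv e by (metis imageE insertI1)
  obtain v where v: "v \<in> e" "v' = f v" using uv e by (metis imageE insertI1 insert_commute)
  have "f ` e = f ` {u,v}" using uv e u v by simp
  then have euv: "e = {u,v}" by (simp only: inj_image_eq_iff[OF assms(1)])
  have "connected_in (E - {e}) u v" using assms(2) e euv unfolding bridgeless_def is_bridge_def by blast
  then have "connected_in (image f ` (E - {e})) u' v'" using conn_map u v by metis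
  moreover have "image f ` (E - {e}) = image f ` E - {e'}"
    using inj_imf[OF assms(1)] e by (simp add: image_set_diff)
  ultimately show False using uv by simp
qed

lemma one_factor_map: assumes "inj f" "one_factor V E F"
  shows "one_factor (f ` V) (image f ` E) (image f ` F)"
  using assms degree_map[OF assms(1)] unfolding one_factor_def by auto

lemma one_factor_unmap: assumes "inj f" "one_factor (f ` V) (image f ` E) F'"
  shows "\<exists>F. F' = image f ` F \<and> F \<subseteq> E \<and> one_factor V E F"
proof -
  define F where "F = {e\<in>E. f ` e \<in> F'}"
  have eq: "F' = image f ` F" using assms(2) unfolding F_def one_factor_def by auto
  have "one_factor V E F"
    unfolding one_factor_def
  proof (intro conjI ballI)
    show "F \<subseteq> E" by (auto simp: F_def)
    fix v assume "v \<in> V"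
    then have "degree F' (f v) = 1" using assms(2) by (auto simp: one_factor_def)
    then show "degree F v = 1" using eq degree_map[OF assms(1)] by simp
  qed
  then show ?thesis using eq by (auto simp: one_factor_def)
qed

lemma card_map_unc: assumes "inj f"
  shows "card (image f ` E - (image f ` F1 \<union> image f ` F2 \<union> image f ` F3)) = card (E - (F1 \<union> F2 \<union> F3))"
proof -
  have "image f ` E - (image f ` F1 \<union> image f ` F2 \<union> image f ` F3) = image f ` (E - (F1 \<union> F2 \<union> F3))"
    using inj_imf[OF assms] by (simp add: image_set_diff image_Un)
  moreover have "inj_on (image f) (E - (F1 \<union> F2 \<union> F3))" using inj_imf[OF assms]
    by (simp add: inj_on_def inj_def)
  ultimately show ?thesis by (simp add: card_image)
qed

lemma mu3is_map: assumes "inj f" "mu3is V E k" shows "mu3is (f ` V) (image f ` E) k"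
proof -
  from assms(2) obtain A1 A2 A3 where A: "one_factor V E A1" "one_factor V E A2" "one_factor V E A3"
      "card (E - (A1 \<union> A2 \<union> A3)) = k" unfolding mu3is_def by blast
  have ex: "\<exists>F1 F2 F3. one_factor (f ` V) (image f ` E) F1 \<and> one_factor (f ` V) (image f ` E) F2
      \<and> one_factor (f ` V) (image f ` E) F3 \<and> card (image f ` E - (F1 \<union> F2 \<union> F3)) = k"
    using A one_factor_map[OF assms(1)] card_map_unc[OF assms(1)] by blast
  have lb: "k \<le> card (image f ` E - (F1 \<union> F2 \<union> F3))"
    if F: "one_factor (f ` V) (image f ` E) F1" "one_factor (f ` V) (image f ` E) F2"
      "one_factor (f ` V) (image f ` E) F3" for F1 F2 F3
  proof -
    obtain G1 where G1: "F1 = image f ` G1" "one_factor V E G1" using one_factor_unmap[OF assms(1) F(1)] by blast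
    obtain G2 where G2: "F2 = image f ` G2" "one_factor V E G2" using one_factor_unmap[OF assms(1) F(2)] by blast
    obtain G3 where G3: "F3 = image f ` G3" "one_factor V E G3" using one_factor_unmap[OF assms(1) F(3)] by blast
    have "k \<le> card (E - (G1 \<union> G2 \<union> G3))" using assms(2) G1 G2 G3 unfolding mu3is_def by blast
    then show ?thesis using G1 G2 G3 card_map_unc[OF assms(1)] by simp
  qed
  show ?thesis unfolding mu3is_def using ex lb by blast
qed

lemma add_family:
  fixes V0 :: "nat set" and P :: "nat set set"
  assumes PV: "cubic PV P" "bridgeless P" "mu3is PV P 3"
    and G: "cubic V0 E0" "bridgeless E0" "mu3is V0 E0 m"
  shows "\<exists>(V::nat set) E. cubic V E \<and> bridgeless E \<and> mu3is V E (3*q + m)"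
proof (induction q)
  case 0 then show ?case using G by auto
next
  case (Suc q)
  from Suc.IH obtain V :: "nat set" and E where VE: "cubic V E" "bridgeless E" "mu3is V E (3*q + m)" by blast
  have fV: "finite V" using VE by (simp add: cubic_def graph_def)
  define c where "c = Suc (Max (V \<union> {0}))"
  have cV: "\<forall>v\<in>V. v < c" unfolding c_def using fV by (simp add: le_imp_less_Suc)
  define f where "f = (\<lambda>x::nat. x + c)"
  have inj: "inj f" by (simp add: f_def inj_def)
  have dis: "V \<inter> f ` PV = {}" using cV by (auto simp: f_def)
  have g1: "graph V E" using VE by (simp add: cubic_def)
  have g2: "graph (f ` PV) (image f ` P)" using cubic_map[OF inj PV(1)] by (simp add: cubic_def)
  have "cubic (V \<union> f ` PV) (E \<union> image f ` P)" by (rule cubic_Un[OF VE(1) cubic_map[OF inj PV(1)] dis])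
  moreover have "bridgeless (E \<union> image f ` P)" by (rule bridgeless_Un[OF VE(2) bridgeless_map[OF inj PV(2)]])
  moreover have "mu3is (V \<union> f ` PV) (E \<union> image f ` P) (3*q + m + 3)"
    by (rule mu3is_Un[OF g1 g2 dis VE(3) mu3is_map[OF inj PV(3)]])
  moreover have eq: "3*q+m+3 = 3*Suc q + m" by simp
  ultimately show ?case by metis
qed



definition edg :: "nat \<times> nat \<Rightarrow> nat set" where "edg p = {fst p, snd p}"

lemma edg_inj: "fst p < snd p \<Longrightarrow> fst q < snd q \<Longrightarrow> edg p = edg q \<Longrightarrow> p = q"
  unfolding edg_def by (cases p; cases q) (auto simp: doubleton_eq_iff)

lemma edg_inj_on: "\<forall>p\<in>S. fst p < snd p \<Longrightarrow> inj_on edg S"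
  unfolding inj_on_def using edg_inj by blast

lemma degree_list:
  assumes "\<forall>p\<in>set xs. fst p < snd p" "distinct xs"
  shows "degree (edg ` set xs) v = length (filter (\<lambda>p. fst p = v \<or> snd p = v) xs)"
proof -
  let ?S = "set (filter (\<lambda>p. fst p = v \<or> snd p = v) xs)"
  have e1: "{e \<in> edg ` set xs. v \<in> e} = edg ` ?S"
    by (auto simp: edg_def)
  have inj: "inj_on edg ?S"
    using edg_inj_on assms(1) by (metis filter_is_subset inj_on_subset)
  have e2: "card ?S = length (filter (\<lambda>p. fst p = v \<or> snd p = v) xs)"
    by (rule distinct_card) (simp add: assms(2))
  show ?thesis unfolding degree_def e1 card_image[OF inj] e2 ..
qed

definition wfg :: "(nat \<times> nat) list \<Rightarrow> nat list \<Rightarrow> bool" where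
  "wfg es vs \<longleftrightarrow> distinct vs \<and> distinct es \<and> (\<forall>p\<in>set es. fst p < snd p \<and> fst p \<in> set vs \<and> snd p \<in> set vs)"

lemma wfg_graph: "wfg es vs \<Longrightarrow> graph (set vs) (edg ` set es)"
  unfolding wfg_def graph_def edg_def by auto

lemma cubic_check:
  assumes "wfg es vs" "\<forall>v\<in>set vs. length (filter (\<lambda>p. fst p = v \<or> snd p = v) es) = 3"
  shows "cubic (set vs) (edg ` set es)"
  using assms wfg_graph[OF assms(1)] degree_list[of es] unfolding cubic_def wfg_def by auto

fun pathok :: "(nat \<times> nat) list \<Rightarrow> nat \<times> nat \<Rightarrow> nat list \<Rightarrow> bool" where
  "pathok es e (x#y#p) = (((x,y) \<in> set es \<or> (y,x) \<in> set es) \<and> (x,y) \<noteq> e \<and> (y,x) \<noteq> e \<and> pathok es e (y#p))"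
| "pathok es e _ = True"

lemma pathok_conn: "pathok es e (x#p) \<Longrightarrow> connected_in (edg ` set es - {edg e}) x (last (x#p))"
proof (induction p arbitrary: x)
  case Nil then show ?case by (simp add: connected_in_def)
next
  case (Cons y p)
  then have h: "(x,y) \<in> set es \<or> (y,x) \<in> set es" "(x,y) \<noteq> e" "(y,x) \<noteq> e" "pathok es e (y#p)" by auto
  have "{x,y} \<in> edg ` set es" using h(1)
    by (metis edg_def fst_conv snd_conv image_eqI insert_commute)
  moreover have "{x,y} \<noteq> edg e" using h(2,3) by (cases e) (auto simp: edg_def doubleton_eq_iff)
  ultimately have "adj (edg ` set es - {edg e}) x y" by (simp add: adj_def)
  moreover have "connected_in (edg ` set es - {edg e}) y (last (y#p))" using Cons.IH h(4) by blast
  ultimately show ?case unfolding connected_in_def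
    by (simp add: converse_rtranclp_into_rtranclp)
qed

definition brok :: "(nat \<times> nat) list \<Rightarrow> nat list list \<Rightarrow> bool" where
  "brok es ps = list_all2 (\<lambda>e p. p \<noteq> [] \<and> hd p = fst e \<and> last p = snd e \<and> pathok es e p) es ps"

lemma bridgeless_check: assumes "brok es ps" shows "bridgeless (edg ` set es)"
  unfolding bridgeless_def is_bridge_def
proof (intro ballI notI)
  fix e' assume "e' \<in> edg ` set es" and
    h: "e' \<in> edg ` set es \<and> (\<exists>u v. e' = {u, v} \<and> \<not> connected_in (edg ` set es - {e'}) u v)"
  then obtain e where e: "e \<in> set es" "e' = edg e" by blast
  obtain i where i: "i < length es" "es ! i = e" using e(1) by (metis in_set_conv_nth)
  have "length ps = length es" using assms unfolding brok_def by (simp add: list_all2_lengthD)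
  then obtain p where p: "p \<noteq> []" "hd p = fst e" "last p = snd e" "pathok es e p"
    using assms i unfolding brok_def list_all2_conv_all_nth by metis
  then obtain p' where "p = fst e # p'" by (metis list.collapse)
  then have c: "connected_in (edg ` set es - {e'}) (fst e) (snd e)" using pathok_conn p e by metis
  from h obtain u v where uv: "e' = {u,v}" "\<not> connected_in (edg ` set es - {e'}) u v" by blast
  have "(u = fst e \<and> v = snd e) \<or> (u = snd e \<and> v = fst e)" using uv(1) e(2) by (auto simp: edg_def doubleton_eq_iff)
  then show False using c uv(2) conn_sym by metis
qed

fun pmf :: "nat \<Rightarrow> (nat\<times>nat) list \<Rightarrow> nat list \<Rightarrow> (nat\<times>nat) list list" where
  "pmf 0 es vs = (if vs = [] then [[]] else [])"
| "pmf (Suc n) es [] = [[]]"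
| "pmf (Suc n) es (v#rest) = concat (map (\<lambda>e. if fst e = v \<and> snd e \<in> set rest then map ((#) e) (pmf n es (remove1 (snd e) rest))
     else if snd e = v \<and> fst e \<in> set rest then map ((#) e) (pmf n es (remove1 (fst e) rest)) else []) es)"

lemma pmf_sub: "ml \<in> set (pmf n es R) \<Longrightarrow> set ml \<subseteq> set es"
proof (induction n es R arbitrary: ml rule: pmf.induct)
  case (1 es vs) then show ?case by (auto split: if_splits)
next
  case (2 n es) then show ?case by auto
next
  case (3 n es v rest)
  then show ?case by (fastforce split: if_splits)
qed

lemma concat_mem: "x \<in> set (f y) \<Longrightarrow> y \<in> set ys \<Longrightarrow> x \<in> set (concat (map f ys))"
  by auto

lemma pmf_complete:
  assumes ne: "\<forall>p\<in>set es. fst p \<noteq> snd p"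
  shows "length R \<le> n \<Longrightarrow> distinct R \<Longrightarrow> F \<subseteq> edg ` set es \<Longrightarrow> (\<forall>e\<in>F. e \<subseteq> set R)
    \<Longrightarrow> (\<forall>v\<in>set R. \<exists>!e. e \<in> F \<and> v \<in> e) \<Longrightarrow> \<exists>ml\<in>set (pmf n es R). edg ` set ml = F"
proof (induction n arbitrary: R F)
  case 0
  then have "R = []" by simp
  then have "F = {}" using 0 by (auto simp: edg_def)
  then show ?case using \<open>R = []\<close> by simp
next
  case (Suc n)
  show ?case
  proof (cases R)
    case Nil
    then have "F = {}" using Suc.prems by (auto simp: edg_def)
    then show ?thesis using Nil by simp
  next
    case (Cons v rest)
    then obtain e0 where e0: "e0 \<in> F" "v \<in> e0" and uq: "\<And>e. e \<in> F \<Longrightarrow> v \<in> e \<Longrightarrow> e = e0"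
      using Suc.prems(5) by auto
    obtain a b where ab: "(a,b) \<in> set es" "e0 = {a,b}" using e0(1) Suc.prems(3) by (auto simp: edg_def)
    have anb: "a \<noteq> b" using ne ab(1) by auto
    have dr: "distinct rest" "v \<notin> set rest" using Suc.prems(2) Cons by auto
    define F' where "F' = F - {e0}"
    have main: "\<exists>ml\<in>set (pmf n es (remove1 w rest)). edg ` set ml = F'"
      if w: "e0 = {v, w}" "w \<noteq> v" for w
    proof -
      have wR: "w \<in> set rest" using Suc.prems(4) e0(1) w Cons by auto
      have setR': "set (remove1 w rest) = set rest - {w}" using dr(1) by simp
      have uqw: "\<And>e. e \<in> F \<Longrightarrow> w \<in> e \<Longrightarrow> e = e0"
        using Suc.prems(5) wR Cons e0(1) w(1) by auto
      show ?thesis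
      proof (rule Suc.IH)
        show "length (remove1 w rest) \<le> n" using Suc.prems(1) Cons wR by (simp add: length_remove1)
        show "distinct (remove1 w rest)" using dr by simp
        show "F' \<subseteq> edg ` set es" using Suc.prems(3) by (auto simp: F'_def)
        show "\<forall>e\<in>F'. e \<subseteq> set (remove1 w rest)"
        proof
          fix e assume e: "e \<in> F'"
          then have "e \<subseteq> set R" "v \<notin> e" "w \<notin> e" using Suc.prems(4) uq uqw by (auto simp: F'_def)
          then show "e \<subseteq> set (remove1 w rest)" using setR' Cons by auto
        qed
        show "\<forall>u\<in>set (remove1 w rest). \<exists>!e. e \<in> F' \<and> u \<in> e"
        proof
          fix u assume u: "u \<in> set (remove1 w rest)"
          then have uR: "u \<in> set R" "u \<noteq> v" "u \<noteq> w" using setR' Cons dr by auto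
          then obtain eu where eu: "eu \<in> F" "u \<in> eu" "\<And>e. e \<in> F \<Longrightarrow> u \<in> e \<Longrightarrow> e = eu"
            using Suc.prems(5) by metis
          have "eu \<noteq> e0" using eu(2) uR w(1) by auto
          then show "\<exists>!e. e \<in> F' \<and> u \<in> e" using eu unfolding F'_def by blast
        qed
      qed
    qed
    have FF: "F = insert e0 F'" using e0(1) by (auto simp: F'_def)
    show ?thesis
    proof (cases "a = v")
      case True
      then obtain ml' where ml': "ml' \<in> set (pmf n es (remove1 b rest))" "edg ` set ml' = F'"
        using main[of b] ab anb by auto
      have bR: "b \<in> set rest" using Suc.prems(4) e0(1) ab True anb Cons by auto
      have "(a,b) # ml' \<in> set (pmf (Suc n) es (v#rest))"
        unfolding pmf.simps by (rule concat_mem[OF _ ab(1)]) (use True bR ml'(1) in simp)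
      then have "(a,b) # ml' \<in> set (pmf (Suc n) es R)" using Cons by simp
      moreover have "edg ` set ((a,b) # ml') = F" using ml'(2) FF ab(2) by (simp add: edg_def)
      ultimately show ?thesis by blast
    next
      case False
      then have bv: "b = v" using e0(2) ab(2) by auto
      then obtain ml' where ml': "ml' \<in> set (pmf n es (remove1 a rest))" "edg ` set ml' = F'"
        using main[of a] ab anb by (auto simp: insert_commute)
      have aR: "a \<in> set rest" using Suc.prems(4) e0(1) ab bv anb Cons by auto
      have "(a,b) # ml' \<in> set (pmf (Suc n) es (v#rest))"
        unfolding pmf.simps by (rule concat_mem[OF _ ab(1)]) (use False bv aR ml'(1) in simp)
      then have "(a,b) # ml' \<in> set (pmf (Suc n) es R)" using Cons by simp
      moreover have "edg ` set ((a,b) # ml') = F" using ml'(2) FF ab(2) by (simp add: edg_def)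
      ultimately show ?thesis by blast
    qed
  qed
qed

definition bv :: "(nat\<times>nat) list \<Rightarrow> (nat\<times>nat) list \<Rightarrow> bool list" where
  "bv es ml = map (\<lambda>e. e \<in> set ml) es"

fun cnt :: "bool list \<Rightarrow> bool list \<Rightarrow> bool list \<Rightarrow> nat" where
  "cnt (a#as) (b#bs) (c#cs) = (if a \<or> b \<or> c then cnt as bs cs else Suc (cnt as bs cs))"
| "cnt _ _ _ = 0"

lemma cnt_bv: "cnt (bv es m1) (bv es m2) (bv es m3) = length (filter (\<lambda>e. \<not> (e \<in> set m1 \<or> e \<in> set m2 \<or> e \<in> set m3)) es)"
  unfolding bv_def by (induction es) auto

fun chk2 :: "('a \<Rightarrow> 'a \<Rightarrow> bool) \<Rightarrow> 'a list \<Rightarrow> bool" where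
  "chk2 Q [] = True" | "chk2 Q (y#ys) = ((\<forall>z\<in>set (y#ys). Q y z) \<and> chk2 Q ys)"

fun chk3 :: "('a \<Rightarrow> 'a \<Rightarrow> 'a \<Rightarrow> bool) \<Rightarrow> 'a list \<Rightarrow> bool" where
  "chk3 P [] = True" | "chk3 P (x#xs) = (chk2 (P x) (x#xs) \<and> chk3 P xs)"

lemma chk2_map: "chk2 Q (map f L) = chk2 (\<lambda>y z. Q (f y) (f z)) L"
  by (induction L) auto

lemma chk3_map: "chk3 P (map f L) = chk3 (\<lambda>x y z. P (f x) (f y) (f z)) L"
  by (induction L) (auto simp: chk2_map)

lemma chk2_sound: "chk2 Q L \<Longrightarrow> y \<in> set L \<Longrightarrow> z \<in> set L \<Longrightarrow> Q y z \<or> Q z y"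
  by (induction L) auto

lemma chk3_sound:
  assumes s1: "\<And>a b c. P a b c = P b a c" and s2: "\<And>a b c. P a b c = P a c b"
  shows "chk3 P L \<Longrightarrow> a \<in> set L \<Longrightarrow> b \<in> set L \<Longrightarrow> c \<in> set L \<Longrightarrow> P a b c"
proof (induction L)
  case Nil then show ?case by simp
next
  case (Cons w ws)
  then have c2: "chk2 (P w) (w#ws)" and c3: "chk3 P ws" by auto
  show ?case
  proof (cases "a = w \<or> b = w \<or> c = w")
    case True
    then show ?thesis
    proof (elim disjE)
      assume "a = w" then show ?thesis using chk2_sound[OF c2, of b c] Cons.prems s2 by metis
    next
      assume "b = w" then show ?thesis using chk2_sound[OF c2, of a c] Cons.prems s1 s2 by metis
    next
      assume "c = w" then show ?thesis using chk2_sound[OF c2, of a b] Cons.prems s1 s2 by metis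
    qed
  next
    case False
    then show ?thesis using Cons c3 by auto
  qed
qed

definition ofok :: "(nat\<times>nat) list \<Rightarrow> nat list \<Rightarrow> (nat\<times>nat) list \<Rightarrow> bool" where
  "ofok es vs ml \<longleftrightarrow> set ml \<subseteq> set es \<and> distinct ml \<and> (\<forall>v\<in>set vs. length (filter (\<lambda>p. fst p = v \<or> snd p = v) ml) = 1)"

lemma ofok_one_factor: assumes "wfg es vs" "ofok es vs ml"
  shows "one_factor (set vs) (edg ` set es) (edg ` set ml)"
proof -
  have "\<forall>p\<in>set ml. fst p < snd p" "distinct ml" "set ml \<subseteq> set es"
    using assms unfolding ofok_def wfg_def by auto
  then show ?thesis using assms(2) degree_list[of ml] unfolding one_factor_def ofok_def by auto
qed

lemma card_unc_list:
  assumes "wfg es vs" "set m1 \<subseteq> set es" "set m2 \<subseteq> set es" "set m3 \<subseteq> set es"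
  shows "card (edg ` set es - (edg ` set m1 \<union> edg ` set m2 \<union> edg ` set m3))
       = cnt (bv es m1) (bv es m2) (bv es m3)"
proof -
  have inj: "inj_on edg (set es)" using assms(1) edg_inj_on unfolding wfg_def by blast
  have eq: "edg ` set es - (edg ` set m1 \<union> edg ` set m2 \<union> edg ` set m3)
      = edg ` set (filter (\<lambda>e. \<not> (e \<in> set m1 \<or> e \<in> set m2 \<or> e \<in> set m3)) es)"
  proof (intro equalityI subsetI)
    fix x assume "x \<in> edg ` set es - (edg ` set m1 \<union> edg ` set m2 \<union> edg ` set m3)"
    then obtain e where e: "e \<in> set es" "x = edg e" "edg e \<notin> edg ` set m1" "edg e \<notin> edg ` set m2" "edg e \<notin> edg ` set m3"
      by blast
    have "e \<notin> set m1" "e \<notin> set m2" "e \<notin> set m3" using e(3-5) by blast+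
    then have "e \<in> set (filter (\<lambda>e. \<not> (e \<in> set m1 \<or> e \<in> set m2 \<or> e \<in> set m3)) es)"
      using e(1) by simp
    then show "x \<in> edg ` set (filter (\<lambda>e. \<not> (e \<in> set m1 \<or> e \<in> set m2 \<or> e \<in> set m3)) es)"
      using e(2) by blast
  next
    fix x assume "x \<in> edg ` set (filter (\<lambda>e. \<not> (e \<in> set m1 \<or> e \<in> set m2 \<or> e \<in> set m3)) es)"
    then obtain e where e: "e \<in> set es" "x = edg e" "e \<notin> set m1" "e \<notin> set m2" "e \<notin> set m3"
      by auto
    have n: "edg e \<notin> edg ` set m1" "edg e \<notin> edg ` set m2" "edg e \<notin> edg ` set m3"
      using inj_on_image_mem_iff[OF inj e(1) assms(2)] inj_on_image_mem_iff[OF inj e(1) assms(3)]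
        inj_on_image_mem_iff[OF inj e(1) assms(4)] e(3-5) by simp_all
    show "x \<in> edg ` set es - (edg ` set m1 \<union> edg ` set m2 \<union> edg ` set m3)"
      unfolding e(2) by (rule DiffI[OF imageI[OF e(1)]]) (use n in blast)
  qed
  have inj2: "inj_on edg (set (filter (\<lambda>e. \<not> (e \<in> set m1 \<or> e \<in> set m2 \<or> e \<in> set m3)) es))"
    by (rule inj_on_subset[OF inj]) auto
  have "card (set (filter (\<lambda>e. \<not> (e \<in> set m1 \<or> e \<in> set m2 \<or> e \<in> set m3)) es)) = length (filter (\<lambda>e. \<not> (e \<in> set m1 \<or> e \<in> set m2 \<or> e \<in> set m3)) es)"
    by (rule distinct_card) (use assms(1) in \<open>simp add: wfg_def\<close>)
  then show ?thesis unfolding eq cnt_bv card_image[OF inj2] .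
qed

lemma one_factor_list:
  assumes "wfg es vs" "one_factor (set vs) (edg ` set es) F"
  shows "\<exists>ml\<in>set (pmf (length vs) es vs). edg ` set ml = F"
proof (rule pmf_complete)
  show "\<forall>p\<in>set es. fst p \<noteq> snd p" using assms(1) unfolding wfg_def by fastforce
  show "length vs \<le> length vs" "distinct vs" using assms(1) by (auto simp: wfg_def)
  show "F \<subseteq> edg ` set es" using assms(2) by (simp add: one_factor_def)
  show "\<forall>e\<in>F. e \<subseteq> set vs" using assms(2) graph_edges_sub[OF wfg_graph[OF assms(1)]]
    unfolding one_factor_def by blast
  show "\<forall>v\<in>set vs. \<exists>!e. e \<in> F \<and> v \<in> e"
  proof
    fix v assume "v \<in> set vs"
    then have "card {e\<in>F. v \<in> e} = Suc 0" using assms(2) by (simp add: one_factor_def degree_def)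
    then have "\<exists>x. {e\<in>F. v \<in> e} = {x}" by (simp only: card_1_singleton_iff)
    then obtain x where "{e\<in>F. v \<in> e} = {x}" by blast
    then have h: "\<And>e. (e \<in> F \<and> v \<in> e) = (e = x)" by (simp add: set_eq_iff)
    show "\<exists>!e. e \<in> F \<and> v \<in> e"
    proof (rule ex1I[of _ x])
      show "x \<in> F \<and> v \<in> x" using h[of x] by simp
      fix e assume "e \<in> F \<and> v \<in> e" then show "e = x" using h[of e] by simp
    qed
  qed
qed

lemma filt_sym1: "filter (\<lambda>e. \<not> (e \<in> A \<or> e \<in> B \<or> e \<in> C)) xs = filter (\<lambda>e. \<not> (e \<in> B \<or> e \<in> A \<or> e \<in> C)) xs"
  by (induction xs) auto

lemma filt_sym2: "filter (\<lambda>e. \<not> (e \<in> A \<or> e \<in> B \<or> e \<in> C)) xs = filter (\<lambda>e. \<not> (e \<in> A \<or> e \<in> C \<or> e \<in> B)) xs"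
  by (induction xs) auto

lemma mu3is_check:
  assumes wf: "wfg es vs"
    and w: "ofok es vs m1" "ofok es vs m2" "ofok es vs m3" "cnt (bv es m1) (bv es m2) (bv es m3) = k"
    and c: "chk3 (\<lambda>a b c. k \<le> cnt a b c) (map (bv es) (pmf (length vs) es vs))"
  shows "mu3is (set vs) (edg ` set es) k"
  unfolding mu3is_def
proof (intro conjI allI impI)
  show "\<exists>F1 F2 F3. one_factor (set vs) (edg ` set es) F1 \<and> one_factor (set vs) (edg ` set es) F2 \<and>
        one_factor (set vs) (edg ` set es) F3 \<and> card (edg ` set es - (F1 \<union> F2 \<union> F3)) = k"
  proof (intro exI conjI)
    show "one_factor (set vs) (edg ` set es) (edg ` set m1)" by (rule ofok_one_factor[OF wf w(1)])
    show "one_factor (set vs) (edg ` set es) (edg ` set m2)" by (rule ofok_one_factor[OF wf w(2)])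
    show "one_factor (set vs) (edg ` set es) (edg ` set m3)" by (rule ofok_one_factor[OF wf w(3)])
    have "set m1 \<subseteq> set es" "set m2 \<subseteq> set es" "set m3 \<subseteq> set es" using w unfolding ofok_def by auto
    then show "card (edg ` set es - (edg ` set m1 \<union> edg ` set m2 \<union> edg ` set m3)) = k"
      using card_unc_list[OF wf] w(4) by simp
  qed
  fix F1 F2 F3
  assume F: "one_factor (set vs) (edg ` set es) F1 \<and> one_factor (set vs) (edg ` set es) F2 \<and> one_factor (set vs) (edg ` set es) F3"
  obtain l1 where l1: "l1 \<in> set (pmf (length vs) es vs)" "edg ` set l1 = F1" using one_factor_list[OF wf] F by blast
  obtain l2 where l2: "l2 \<in> set (pmf (length vs) es vs)" "edg ` set l2 = F2" using one_factor_list[OF wf] F by blast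
  obtain l3 where l3: "l3 \<in> set (pmf (length vs) es vs)" "edg ` set l3 = F3" using one_factor_list[OF wf] F by blast
  let ?P = "\<lambda>x y z. k \<le> length (filter (\<lambda>e. \<not> (e \<in> set x \<or> e \<in> set y \<or> e \<in> set z)) es)"
  have c': "chk3 ?P (pmf (length vs) es vs)" using c unfolding chk3_map cnt_bv .
  have "?P l1 l2 l3"
    by (rule chk3_sound[OF _ _ c' l1(1) l2(1) l3(1)]) (subst filt_sym1 filt_sym2, rule refl)+
  then show "k \<le> card (edg ` set es - (F1 \<union> F2 \<union> F3))"
    using card_unc_list[OF wf pmf_sub[OF l1(1)] pmf_sub[OF l2(1)] pmf_sub[OF l3(1)]] l1 l2 l3 cnt_bv by simp
qed


definition es3 :: "(nat \<times> nat) list" where "es3 = [(0,1), (0,4), (0,5), (1,2), (1,6), (2,3), (2,7), (3,4), (3,8), (4,9), (5,7), (5,8), (6,8), (6,9), (7,9)]"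
definition ps3 :: "nat list list" where "ps3 = [[0, 4, 3, 2, 1], [0, 1, 2, 3, 4], [0, 1, 2, 7, 5], [1, 0, 4, 3, 2], [1, 0, 4, 9, 6], [2, 1, 0, 4, 3], [2, 1, 0, 5, 7], [3, 2, 1, 0, 4], [3, 2, 1, 6, 8], [4, 0, 1, 6, 9], [5, 0, 1, 2, 7], [5, 0, 1, 6, 8], [6, 1, 0, 5, 8], [6, 1, 0, 4, 9], [7, 2, 1, 6, 9]]"
definition ma3 :: "(nat \<times> nat) list" where "ma3 = [(0,1), (2,3), (4,9), (5,7), (6,8)]"
definition mb3 :: "(nat \<times> nat) list" where "mb3 = [(0,1), (2,7), (3,4), (5,8), (6,9)]"
definition mc3 :: "(nat \<times> nat) list" where "mc3 = [(0,4), (1,2), (3,8), (5,7), (6,9)]"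

lemma wf3: "wfg es3 [0..<10]" by code_simp
lemma G3: "cubic (set [0..<10]) (edg ` set es3) \<and> bridgeless (edg ` set es3) \<and> mu3is (set [0..<10]) (edg ` set es3) 3"
proof (intro conjI)
  show "cubic (set [0..<10]) (edg ` set es3)"
    by (rule cubic_check[OF wf3]) code_simp
  show "bridgeless (edg ` set es3)"
    by (rule bridgeless_check[of _ ps3]) code_simp
  show "mu3is (set [0..<10]) (edg ` set es3) 3"
    by (rule mu3is_check[OF wf3, of ma3 mb3 mc3]; code_simp)
qed

definition es4 :: "(nat \<times> nat) list" where "es4 = [(0,1), (0,5), (0,9), (1,2), (1,6), (2,3), (2,7), (3,8), (3,12), (4,6), (4,7), (4,13), (5,7), (5,8), (6,8), (9,10), (9,14), (10,11), (10,15), (11,12), (11,16), (12,17), (13,15), (13,16), (14,16), (14,17), (15,17)]"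
definition ps4 :: "nat list list" where "ps4 = [[0, 5, 7, 2, 1], [0, 1, 2, 7, 5], [0, 1, 2, 3, 12, 11, 10, 9], [1, 0, 5, 7, 2], [1, 0, 5, 8, 6], [2, 1, 6, 8, 3], [2, 1, 0, 5, 7], [3, 2, 1, 6, 8], [3, 2, 1, 0, 9, 10, 11, 12], [4, 7, 2, 1, 6], [4, 6, 1, 2, 7], [4, 6, 1, 0, 9, 10, 15, 13], [5, 0, 1, 2, 7], [5, 0, 1, 6, 8], [6, 1, 0, 5, 8], [9, 14, 16, 11, 10], [9, 10, 11, 16, 14], [10, 9, 14, 16, 11], [10, 9, 14, 17, 15], [11, 10, 15, 17, 12], [11, 10, 9, 14, 16], [12, 11, 10, 15, 17], [13, 16, 11, 10, 15], [13, 15, 10, 11, 16], [14, 9, 10, 11, 16], [14, 9, 10, 15, 17], [15, 10, 9, 14, 17]]"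
definition ma4 :: "(nat \<times> nat) list" where "ma4 = [(0,1), (2,3), (4,13), (5,7), (6,8), (9,10), (11,12), (14,16), (15,17)]"
definition mb4 :: "(nat \<times> nat) list" where "mb4 = [(0,5), (1,2), (3,12), (4,7), (6,8), (9,14), (10,11), (13,16), (15,17)]"
definition mc4 :: "(nat \<times> nat) list" where "mc4 = [(0,9), (1,6), (2,7), (3,12), (4,13), (5,8), (10,15), (11,16), (14,17)]"

lemma wf4: "wfg es4 [0..<18]" by code_simp
lemma G4: "cubic (set [0..<18]) (edg ` set es4) \<and> bridgeless (edg ` set es4) \<and> mu3is (set [0..<18]) (edg ` set es4) 4"
proof (intro conjI)
  show "cubic (set [0..<18]) (edg ` set es4)"
    by (rule cubic_check[OF wf4]) code_simp
  show "bridgeless (edg ` set es4)"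
    by (rule bridgeless_check[of _ ps4]) code_simp
  show "mu3is (set [0..<18]) (edg ` set es4) 4"
    by (rule mu3is_check[OF wf4, of ma4 mb4 mc4]; code_simp)
qed

definition es5 :: "(nat \<times> nat) list" where "es5 = [(0,1), (0,18), (0,19), (1,2), (1,6), (2,3), (2,7), (3,20), (3,21), (4,6), (4,7), (4,13), (5,7), (5,8), (5,18), (6,8), (8,20), (9,10), (9,14), (9,19), (10,11), (10,15), (11,12), (11,16), (12,17), (12,21), (13,15), (13,16), (14,16), (14,17), (15,17), (18,19), (20,21)]"
definition ps5 :: "nat list list" where "ps5 = [[0, 18, 5, 7, 2, 1], [0, 19, 18], [0, 18, 19], [1, 6, 4, 7, 2], [1, 2, 7, 4, 6], [2, 1, 6, 8, 20, 3], [2, 1, 6, 4, 7], [3, 21, 20], [3, 20, 21], [4, 7, 2, 1, 6], [4, 6, 1, 2, 7], [4, 6, 1, 0, 19, 9, 10, 15, 13], [5, 8, 6, 4, 7], [5, 7, 4, 6, 8], [5, 7, 2, 1, 0, 18], [6, 4, 7, 5, 8], [8, 5, 7, 2, 3, 20], [9, 14, 16, 11, 10], [9, 10, 11, 16, 14], [9, 10, 15, 13, 4, 6, 1, 0, 19], [10, 9, 14, 16, 11], [10, 9, 14, 17, 15], [11, 10, 15, 17, 12], [11, 10, 9, 14, 16], [12, 11, 10, 15, 17], [12, 11, 16, 13, 4, 6, 8, 20, 21], [13, 16, 11, 10, 15], [13, 15, 10, 11, 16], [14, 9, 10, 11, 16], [14, 9, 10, 15, 17], [15, 10, 9, 14,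 17], [18, 0, 19], [20, 3, 21]]"
definition ma5 :: "(nat \<times> nat) list" where "ma5 = [(0,1), (2,3), (4,6), (5,7), (8,20), (9,10), (11,16), (12,21), (13,15), (14,17), (18,19)]"
definition mb5 :: "(nat \<times> nat) list" where "mb5 = [(0,1), (2,3), (4,7), (5,18), (6,8), (9,19), (10,15), (11,12), (13,16), (14,17), (20,21)]"
definition mc5 :: "(nat \<times> nat) list" where "mc5 = [(0,18), (1,6), (2,7), (3,20), (4,13), (5,8), (9,19), (10,11), (12,21), (14,16), (15,17)]"

lemma wf5: "wfg es5 [0..<22]" by code_simp
lemma G5: "cubic (set [0..<22]) (edg ` set es5) \<and> bridgeless (edg ` set es5) \<and> mu3is (set [0..<22]) (edg ` set es5) 5"
proof (intro conjI)
  show "cubic (set [0..<22]) (edg ` set es5)"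
    by (rule cubic_check[OF wf5]) code_simp
  show "bridgeless (edg ` set es5)"
    by (rule bridgeless_check[of _ ps5]) code_simp
  show "mu3is (set [0..<22]) (edg ` set es5) 5"
    by (rule mu3is_check[OF wf5, of ma5 mb5 mc5]; code_simp)
qed

theorem mainTheorem8:
  fixes k :: nat
  assumes "k \<ge> 3"
  shows "\<exists>(V :: nat set) (E :: nat set set). cubic V E \<and> bridgeless E \<and> mu3 V E = k"
proof -
  have P: "cubic (set [0..<10]) (edg ` set es3)" "bridgeless (edg ` set es3)" "mu3is (set [0..<10]) (edg ` set es3) 3"
    using G3 by auto
  have "\<exists>(V :: nat set) E. cubic V E \<and> bridgeless E \<and> mu3is V E k"
  proof -
    have k3: "k = 3 * (k div 3) + k mod 3" by simp
    have "k div 3 \<ge> 1" using assms by simp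
    consider "k mod 3 = 0" | "k mod 3 = 1" | "k mod 3 = 2" by linarith
    then show ?thesis
    proof cases
      case 1
      have "\<exists>(V :: nat set) E. cubic V E \<and> bridgeless E \<and> mu3is V E (3 * (k div 3) + 0)"
        by (rule add_family[OF P empty_graph])
      then show ?thesis using 1 k3 by simp
    next
      case 2
      have "\<exists>(V :: nat set) E. cubic V E \<and> bridgeless E \<and> mu3is V E (3 * (k div 3 - 1) + 4)"
        using add_family[OF P] G4 by blast
      moreover have "3 * (k div 3 - 1) + 4 = k" using 2 k3 \<open>k div 3 \<ge> 1\<close> by linarith
      ultimately show ?thesis by simp
    next
      case 3
      have "\<exists>(V :: nat set) E. cubic V E \<and> bridgeless E \<and> mu3is V E (3 * (k div 3 - 1) + 5)"
        using add_family[OF P] G5 by blast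
      moreover have "3 * (k div 3 - 1) + 5 = k" using 3 k3 \<open>k div 3 \<ge> 1\<close> by linarith
      ultimately show ?thesis by simp
    qed
  qed
  then show ?thesis using mu3is_mu3 by blast
qed

end
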